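(* Let $(M,\widetilde B)$ be a strict root of unity quantum seed with respect to a skew-symmetric integer matrix $\Lambda\in M_N(\mathbb Z)$, and let $k\in\mathrm{ex}$ and $s\in\{+,-\}$. Then $\mu_k(M,\widetilde B)$ is also a strict root of unity quantum seed, with respect to the skew-symmetric integer matrix $\Lambda'=E_s^\top\Lambda E_s$.
   Context: Let $\ell$ be a positive integer, $\mathbb Z_\ell=\mathbb Z/\ell\mathbb Z$, $\varepsilon^{1/2}\in\mathbb C$ a primitive $\ell$-th root of unity, $\mathcal A^{1/2}_\varepsilon=\mathbb Z[\varepsilon^{1/2}]$, $\varepsilon^{a/2}=(\varepsilon^{1/2})^a$ for $a\in\mathbb Z_\ell$; $\overline C$ is the reduction mod $\ell$ of an integer matrix $C$; $e_1,\dots,e_N$ is the standard basis of $\mathbb Z^N$. For a skew-symmetric bilinear form $\Lambda:\mathbb Z^N\times\mathbb Z^N\to\mathbb Z_\ell$ with matrix $(\lambda_{ij})$, $\mathcal T_\varepsilon(\Lambda)$ is the $\mathcal A^{1/2}_\varepsilon$-algebra with basis $\{X^f\}_{f\in\mathbb Z^N}$ and $X^fX^g=\varepsilon^{\Lambda(f,g)/2}X^{f+g}$. A root of unity toric frame of a division algebra $\mathcal F$ over $\mathbb Q(\varepsilon^{1/2})$ is a map $M:\mathbb Z^N\to\mathcal F$ such that for some (unique) skew-symmetric $\Lambda=:\Lambda_M$ there is an injective $\mathcal A^{1/2}_\varepsilon$-algebra map $\phi:\mathcal T_\varepsilon(\Lambda)\to\mathcal F$, $\phi(X^f)=M(f)$,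 with $\mathcal F$ the skew field of fractions of its image. Fix $\mathrm{ex}\subseteq[1,N]$. An exchange matrix $\widetilde B=(b_{ij})$ is an integer matrix with rows indexed by $[1,N]$, columns by $\mathrm{ex}$, principal part $B$, $k$-th column $b^k$. $(\Lambda,\widetilde B)$ (with $\Lambda$ over $\mathbb Z_\ell$) is $\ell$-compatible with respect to $D=\mathrm{diag}(d_j)_{j\in\mathrm{ex}}$, $d_j\in\mathbb Z_{>0}$, if $DB$ is skew-symmetric and $\sum_k\overline b_{kj}\lambda_{ki}=\delta_{ij}\overline d_j$ in $\mathbb Z_\ell$ for all $i\in[1,N]$, $j\in\mathrm{ex}$; a root of unity quantum seed is $(M,\widetilde B)$ with $(\Lambda_M,\widetilde B)$ $\ell$-compatible. A pair $(\Lambda,\widetilde B)$ with $\Lambda=(\lambda_{ij})\in M_N(\mathbb Z)$ skew-symmetric is compatible with respect to $D$ if $\sum_k b_{kj}\lambda_{ki}=\delta_{ij}d_j$ for all $i\in[1,N]$, $j\in\mathrm{ex}$. A root of unity quantum seed $(M,\widetilde B)$, $\ell$-compatible w.r.t. $D$, is strict with respect to a skew-symmetric $\Lambda\in M_N(\mathbb Z)$ if $\overline\Lambda=\Lambda_M$ and $(\Lambda,\widetilde B)$ is compatible with respect to the same $D$. For a sign $s$, $E_s=(e_{ij})\in M_N(\mathbb Z)$ has $e_{ij}=\delta_{ij}$ for $j\ne k$, $e_{kk}=-1$, $e_{ik}=\max(0,-sb_{ik})$ for $i\ne k$. For $b\in\mathbb Z^N$, $[b]_\pm$ keeps the entries $b_i$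 with $\pm b_i\ge0$ and sets the others to $0$. Mutation: $\mu_k(\widetilde B)=(b'_{ij})$, $b'_{ij}=-b_{ij}$ if $i=k$ or $j=k$, otherwise $b'_{ij}=b_{ij}+(|b_{ik}|b_{kj}+b_{ik}|b_{kj}|)/2$; $\mu_k(M)$ is the root of unity toric frame with matrix $\overline E_s^\top\Lambda_M\overline E_s$ (independent of $s$) and $\mu_k(M)(e_j)=M(e_j)$ ($j\ne k$), $\mu_k(M)(e_k)=M(-e_k+[b^k]_+)+M(-e_k-[b^k]_-)$. *)

theory Defs
  imports "HOL-Number_Theory.Cong"
begin

text \<open>Indices range over [1,N] (naturals). Integer matrices are functions
  nat \<Rightarrow> nat \<Rightarrow> int (entries outside the relevant index ranges are irrelevant).
  An element of Z_l is represented by an integer; equality in Z_l is congruence mod l.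
  The exchange matrix B has rows in [1,N] and columns in ex; D = diag(d j), j in ex.
  Signs s in {+,-} are represented by the integers 1 and -1.\<close>

definition skew_int :: "nat \<Rightarrow> (nat \<Rightarrow> nat \<Rightarrow> int) \<Rightarrow> bool" where
  "skew_int N Lam \<longleftrightarrow> (\<forall>i\<in>{1..N}. \<forall>j\<in>{1..N}. Lam i j = - Lam j i)"

definition skew_mod :: "nat \<Rightarrow> nat \<Rightarrow> (nat \<Rightarrow> nat \<Rightarrow> int) \<Rightarrow> bool" where
  "skew_mod l N L \<longleftrightarrow> (\<forall>i\<in>{1..N}. \<forall>j\<in>{1..N}. [L i j = - L j i] (mod int l))"

definition DB_skew :: "nat set \<Rightarrow> (nat \<Rightarrow> nat \<Rightarrow> int) \<Rightarrow> (nat \<Rightarrow> int) \<Rightarrow> bool" where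
  "DB_skew ex B d \<longleftrightarrow> (\<forall>i\<in>ex. \<forall>j\<in>ex. d i * B i j = - (d j * B j i))"

definition l_compatible ::
  "nat \<Rightarrow> nat \<Rightarrow> nat set \<Rightarrow> (nat \<Rightarrow> nat \<Rightarrow> int) \<Rightarrow> (nat \<Rightarrow> nat \<Rightarrow> int) \<Rightarrow> (nat \<Rightarrow> int) \<Rightarrow> bool" where
  "l_compatible l N ex L B d \<longleftrightarrow>
     (\<forall>j\<in>ex. d j > 0) \<and> DB_skew ex B d \<and>
     (\<forall>i\<in>{1..N}. \<forall>j\<in>ex.
        [(\<Sum>k=1..N. B k j * L k i) = (if i = j then d j else 0)] (mod int l))"

definition compatible ::
  "nat \<Rightarrow> nat set \<Rightarrow> (nat \<Rightarrow> nat \<Rightarrow> int) \<Rightarrow> (nat \<Rightarrow> nat \<Rightarrow> int) \<Rightarrow> (nat \<Rightarrow> int) \<Rightarrow> bool" where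
  "compatible N ex Lam B d \<longleftrightarrow>
     (\<forall>i\<in>{1..N}. \<forall>j\<in>ex. (\<Sum>k=1..N. B k j * Lam k i) = (if i = j then d j else 0))"

text \<open>A root of unity quantum seed, recorded through the matrix L = Lambda_M of its toric
  frame (a skew-symmetric Z_l-valued form) and its exchange matrix B.\<close>
definition rou_seed ::
  "nat \<Rightarrow> nat \<Rightarrow> nat set \<Rightarrow> (nat \<Rightarrow> nat \<Rightarrow> int) \<Rightarrow> (nat \<Rightarrow> nat \<Rightarrow> int) \<Rightarrow> (nat \<Rightarrow> int) \<Rightarrow> bool" where
  "rou_seed l N ex L B d \<longleftrightarrow> skew_mod l N L \<and> l_compatible l N ex L B d"

definition strict_seed ::
  "nat \<Rightarrow> nat \<Rightarrow> nat set \<Rightarrow> (nat \<Rightarrow> nat \<Rightarrow> int) \<Rightarrow> (nat \<Rightarrow> nat \<Rightarrow> int) \<Rightarrow> (nat \<Rightarrow> int)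
     \<Rightarrow> (nat \<Rightarrow> nat \<Rightarrow> int) \<Rightarrow> bool" where
  "strict_seed l N ex L B d Lam \<longleftrightarrow>
     rou_seed l N ex L B d \<and> skew_int N Lam \<and>
     (\<forall>i\<in>{1..N}. \<forall>j\<in>{1..N}. [Lam i j = L i j] (mod int l)) \<and>
     compatible N ex Lam B d"

definition Emat :: "int \<Rightarrow> nat \<Rightarrow> (nat \<Rightarrow> nat \<Rightarrow> int) \<Rightarrow> nat \<Rightarrow> nat \<Rightarrow> int" where
  "Emat s k B i j =
     (if j \<noteq> k then (if i = j then 1 else 0)
      else if i = k then -1 else max 0 (- s * B i k))"

definition congr_mat :: "nat \<Rightarrow> (nat \<Rightarrow> nat \<Rightarrow> int) \<Rightarrow> (nat \<Rightarrow> nat \<Rightarrow> int) \<Rightarrow> nat \<Rightarrow> nat \<Rightarrow> int" where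
  "congr_mat N C A i j = (\<Sum>a=1..N. \<Sum>b=1..N. C a i * A a b * C b j)"

definition mut_B :: "nat \<Rightarrow> (nat \<Rightarrow> nat \<Rightarrow> int) \<Rightarrow> nat \<Rightarrow> nat \<Rightarrow> int" where
  "mut_B k B i j =
     (if i = k \<or> j = k then - B i j
      else B i j + (\<bar>B i k\<bar> * B k j + B i k * \<bar>B k j\<bar>) div 2)"

text \<open>Matrix (over Z_l, integer representatives) of the mutated toric frame mu_k(M):
  E_s^T Lambda_M E_s reduced mod l, taken here with s = + (it is independent of s).\<close>
definition mut_frame_mat :: "nat \<Rightarrow> nat \<Rightarrow> (nat \<Rightarrow> nat \<Rightarrow> int) \<Rightarrow> (nat \<Rightarrow> nat \<Rightarrow> int) \<Rightarrow> nat \<Rightarrow> nat \<Rightarrow> int" where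
  "mut_frame_mat N k B L = congr_mat N (Emat 1 k B) L"

end

theory Submission
  imports Defs
begin

definition wv :: "int \<Rightarrow> nat \<Rightarrow> (nat \<Rightarrow> nat \<Rightarrow> int) \<Rightarrow> nat \<Rightarrow> int" where
  "wv s k B b = (if b = k then -2 else max 0 (- s * B b k))"

lemma Emat_split: "Emat s k B b j = (if b = j then 1 else 0) + (if j = k then wv s k B b else 0)"
  by (simp add: Emat_def wv_def)

lemma col_sum:
  assumes "j \<in> {1..N}"
  shows "(\<Sum>b=1..N. X b * Emat s k B b j) = X j + (if j = k then (\<Sum>b=1..N. X b * wv s k B b) else 0)"
proof -
  have "(\<Sum>b=1..N. X b * Emat s k B b j) = (\<Sum>b=1..N. (if b = j then X b else 0) + (if j = k then X b * wv s k B b else 0))"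
    by (rule sum.cong) (auto simp: Emat_split algebra_simps)
  also have "\<dots> = X j + (if j = k then (\<Sum>b=1..N. X b * wv s k B b) else 0)"
    using assms by (simp add: sum.distrib sum.delta)
  finally show ?thesis .
qed

lemma row_sum:
  assumes "k \<in> {1..N}" "a \<in> {1..N}"
  shows "(\<Sum>m=1..N. Emat s k B a m * Y m) = Y a + wv s k B a * Y k"
proof -
  have "(\<Sum>m=1..N. Emat s k B a m * Y m) = (\<Sum>m=1..N. (if m = a then Y m else 0) + (if m = k then wv s k B a * Y k else 0))"
    by (rule sum.cong) (auto simp: Emat_split algebra_simps)
  also have "\<dots> = (if a \<in> {1..N} then Y a else 0) + wv s k B a * Y k"
    using assms by (simp add: sum.distrib sum.delta' )
  finally show ?thesis using assms by simp
qed

lemma congr_skew: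
  assumes "skew_int N Lam"
  shows "skew_int N (congr_mat N E Lam)"
  unfolding skew_int_def congr_mat_def
proof (intro ballI)
  fix i j assume i: "i \<in> {1..N}" and j: "j \<in> {1..N}"
  have "(\<Sum>a = 1..N. \<Sum>b = 1..N. E a i * Lam a b * E b j) = (\<Sum>a = 1..N. \<Sum>b = 1..N. - (E b j * Lam b a * E a i))"
  proof (rule sum.cong[OF refl], rule sum.cong[OF refl])
    fix a b assume "a \<in> {1..N}" "b \<in> {1..N}"
    then have "Lam a b = - Lam b a" using assms unfolding skew_int_def by blast
    then show "E a i * Lam a b * E b j = - (E b j * Lam b a * E a i)" by simp
  qed
  also have "\<dots> = - (\<Sum>b = 1..N. \<Sum>a = 1..N. E b j * Lam b a * E a i)"
    by (subst sum.swap) (simp add: sum_negf)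
  finally show "(\<Sum>a = 1..N. \<Sum>b = 1..N. E a i * Lam a b * E b j) = - (\<Sum>a = 1..N. \<Sum>b = 1..N. E a j * Lam a b * E b i)" .
qed

lemma div_half: "(\<bar>x\<bar> * y + x * \<bar>y\<bar>) div 2 = (if 0 < x \<and> 0 < y then x*y else if x < 0 \<and> y < 0 then -(x*y) else (0::int))"
proof -
  consider "0 < x" "0 < y" | "x < 0" "y < 0" | "\<not>(0 < x \<and> 0 < y) \<and> \<not>(x < 0 \<and> y < 0)" by linarith
  then show ?thesis
  proof cases
    case 1 then have "\<bar>x\<bar> * y + x * \<bar>y\<bar> = 2*(x*y)" by simp
    then show ?thesis using 1 by simp
  next
    case 2 then have "\<bar>x\<bar> * y + x * \<bar>y\<bar> = 2*(-(x*y))" by simp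
    then show ?thesis using 2 by simp
  next
    case 3 then have "\<bar>x\<bar> * y + x * \<bar>y\<bar> = 0" by (auto simp: abs_if)
    then show ?thesis using 3 by simp
  qed
qed

definition fv :: "int \<Rightarrow> nat \<Rightarrow> (nat \<Rightarrow> nat \<Rightarrow> int) \<Rightarrow> nat \<Rightarrow> int" where
  "fv s k B j = (if j = k then -2 else max 0 (s * B k j))"

lemma G_entry:
  assumes "k \<in> {1..N}" "a \<in> {1..N}" "B k k = 0" "s \<in> {1,-1}"
  shows "(\<Sum>m=1..N. Emat s k B a m * mut_B k B m j) = B a j + B a k * fv s k B j"
proof -
  have "(\<Sum>m=1..N. Emat s k B a m * mut_B k B m j) = mut_B k B a j + wv s k B a * mut_B k B k j"
    using row_sum[OF assms(1,2)] .
  also have "\<dots> = B a j + B a k * fv s k B j"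
  proof (cases "a = k")
    case True then show ?thesis using assms by (simp add: mut_B_def wv_def fv_def)
  next
    case False
    show ?thesis
    proof (cases "j = k")
      case True then show ?thesis using assms False by (simp add: mut_B_def wv_def fv_def)
    next
      case jk: False
      have "mut_B k B a j + wv s k B a * mut_B k B k j
          = B a j + (if 0 < B a k \<and> 0 < B k j then B a k * B k j else if B a k < 0 \<and> B k j < 0 then -(B a k * B k j) else 0)
            - max 0 (- s * B a k) * B k j"
        using False jk by (simp add: mut_B_def wv_def div_half)
      also have "\<dots> = B a j + B a k * fv s k B j"
        using assms(4) jk unfolding fv_def
        by (cases "0 < B a k"; cases "B a k < 0"; cases "0 < B k j"; cases "B k j < 0"; auto simp: max_def)
      finally show ?thesis .
    qed
  qed
  finally show ?thesis .
qed

lemma reorder: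
  fixes Bp :: "nat \<Rightarrow> int" and E Lam :: "nat \<Rightarrow> nat \<Rightarrow> int"
  shows "(\<Sum>m\<in>A. Bp m * (\<Sum>a\<in>A. \<Sum>b\<in>A. E a m * Lam a b * E b i))
   = (\<Sum>b\<in>A. (\<Sum>a\<in>A. (\<Sum>m\<in>A. E a m * Bp m) * Lam a b) * E b i)"
proof -
  have "(\<Sum>m\<in>A. Bp m * (\<Sum>a\<in>A. \<Sum>b\<in>A. E a m * Lam a b * E b i))
      = (\<Sum>m\<in>A. \<Sum>a\<in>A. \<Sum>b\<in>A. E a m * Bp m * Lam a b * E b i)"
    by (simp add: sum_distrib_left mult.assoc mult.left_commute)
  also have "\<dots> = (\<Sum>a\<in>A. \<Sum>m\<in>A. \<Sum>b\<in>A. E a m * Bp m * Lam a b * E b i)"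
    by (rule sum.swap)
  also have "\<dots> = (\<Sum>a\<in>A. \<Sum>b\<in>A. \<Sum>m\<in>A. E a m * Bp m * Lam a b * E b i)"
    by (rule sum.cong[OF refl], rule sum.swap)
  also have "\<dots> = (\<Sum>b\<in>A. \<Sum>a\<in>A. \<Sum>m\<in>A. E a m * Bp m * Lam a b * E b i)"
    by (rule sum.swap)
  also have "\<dots> = (\<Sum>b\<in>A. (\<Sum>a\<in>A. (\<Sum>m\<in>A. E a m * Bp m) * Lam a b) * E b i)"
    by (simp add: sum_distrib_right mult.assoc)
  finally show ?thesis .
qed

lemma compat_mut:
  assumes ex: "ex \<subseteq> {1..N}" and kex: "k \<in> ex" and s: "s \<in> {1,-1}"
    and dpos: "\<forall>j\<in>ex. d j > 0" and db: "DB_skew ex B d"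
    and comp: "compatible N ex Lam B d"
  shows "compatible N ex (congr_mat N (Emat s k B) Lam) (mut_B k B) d"
  unfolding compatible_def
proof (intro ballI)
  fix i j assume i: "i \<in> {1..N}" and j: "j \<in> ex"
  have k: "k \<in> {1..N}" using ex kex by auto
  have jN: "j \<in> {1..N}" using ex j by auto
  have Bkk: "B k k = 0" using db kex dpos unfolding DB_skew_def by force
  let ?E = "Emat s k B"
  have cb: "(\<Sum>a=1..N. B a c * Lam a b) = (if b = c then d c else 0)" if "b \<in> {1..N}" "c \<in> ex" for b c
    using comp that unfolding compatible_def by auto
  have "(\<Sum>m=1..N. mut_B k B m j * congr_mat N ?E Lam m i)
     = (\<Sum>b=1..N. (\<Sum>a=1..N. (\<Sum>m=1..N. ?E a m * mut_B k B m j) * Lam a b) * ?E b i)"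
    unfolding congr_mat_def by (rule reorder)
  also have "\<dots> = (\<Sum>b=1..N. (\<Sum>a=1..N. (B a j + B a k * fv s k B j) * Lam a b) * ?E b i)"
  proof -
    have Gj: "\<And>a. a \<in> {1..N} \<Longrightarrow> (\<Sum>m=1..N. ?E a m * mut_B k B m j) = B a j + B a k * fv s k B j"
      using G_entry k Bkk s by blast
    show ?thesis
    proof (rule sum.cong[OF refl])
      fix b assume "b \<in> {1..N}"
      have "(\<Sum>a=1..N. (\<Sum>m=1..N. ?E a m * mut_B k B m j) * Lam a b) = (\<Sum>a=1..N. (B a j + B a k * fv s k B j) * Lam a b)"
        by (rule sum.cong[OF refl]) (simp only: Gj)
      then show "(\<Sum>a=1..N. (\<Sum>m=1..N. ?E a m * mut_B k B m j) * Lam a b) * ?E b i = (\<Sum>a=1..N. (B a j + B a k * fv s k B j) * Lam a b) * ?E b i" by simp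
    qed
  qed
  also have "\<dots> = (\<Sum>b=1..N. ((if b = j then d j else 0) + fv s k B j * (if b = k then d k else 0)) * ?E b i)"
  proof (rule sum.cong[OF refl])
    fix b assume b: "b \<in> {1..N}"
    have "(\<Sum>a=1..N. (B a j + B a k * fv s k B j) * Lam a b)
        = (\<Sum>a=1..N. B a j * Lam a b) + fv s k B j * (\<Sum>a=1..N. B a k * Lam a b)"
      by (simp add: algebra_simps sum.distrib sum_distrib_left)
    then show "(\<Sum>a=1..N. (B a j + B a k * fv s k B j) * Lam a b) * ?E b i
        = ((if b = j then d j else 0) + fv s k B j * (if b = k then d k else 0)) * ?E b i"
      using cb[OF b j] cb[OF b kex] by simp
  qed
  also have "\<dots> = d j * ?E j i + fv s k B j * d k * ?E k i"
  proof -
    have "(\<Sum>b=1..N. ((if b = j then d j else 0) + fv s k B j * (if b = k then d k else 0)) * ?E b i)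
      = (\<Sum>b=1..N. (if b = j then d j * ?E j i else 0) + (if b = k then fv s k B j * d k * ?E k i else 0))"
      by (rule sum.cong[OF refl]) (auto simp: algebra_simps)
    also have "\<dots> = d j * ?E j i + fv s k B j * d k * ?E k i"
      using jN k by (simp only: sum.distrib sum.delta finite_atLeastAtMost if_True)
    finally show ?thesis .
  qed
  also have "\<dots> = (if i = j then d j else 0)"
  proof (cases "i = k")
    case ik: True
    show ?thesis
    proof (cases "j = k")
      case True then show ?thesis using ik by (simp add: Emat_def fv_def)
    next
      case False
      have "d j * B j k = - (d k * B k j)" using db j kex unfolding DB_skew_def by blast
      moreover have "d j > 0" "d k > 0" using dpos j kex by auto
      ultimately have "d j * max 0 (- s * B j k) = d k * max 0 (s * B k j)"
      proof -
        assume eq: "d j * B j k = - (d k * B k j)" and dj: "d j > 0" and dk: "d k > 0"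
        have a1: "(0 < B j k) = (0 < d j * B j k)" "(B j k < 0) = (d j * B j k < 0)"
          using dj by (simp_all add: zero_less_mult_iff mult_less_0_iff)
        have a2: "(0 < B k j) = (0 < d k * B k j)" "(B k j < 0) = (d k * B k j < 0)"
          using dk by (simp_all add: zero_less_mult_iff mult_less_0_iff)
        have "0 < B j k \<longleftrightarrow> B k j < 0" "B j k < 0 \<longleftrightarrow> 0 < B k j"
          using a1 a2 eq by linarith+
        then show ?thesis using s eq by (auto simp: max_def)
      qed
      then show ?thesis using ik False by (simp add: Emat_def fv_def)
    qed
  next
    case False then show ?thesis by (simp add: Emat_def)
  qed
  finally show "(\<Sum>m=1..N. mut_B k B m j * congr_mat N ?E Lam m i) = (if i = j then d j else 0)" .
qed

lemma congr_form:
  assumes i: "i \<in> {1..N}" and j: "j \<in> {1..N}"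
  shows "congr_mat N (Emat s k B) Lam i j =
    Lam i j + (if j = k then (\<Sum>b=1..N. Lam i b * wv s k B b) else 0)
    + (if i = k then (\<Sum>a=1..N. (Lam a j + (if j = k then (\<Sum>b=1..N. Lam a b * wv s k B b) else 0)) * wv s k B a) else 0)"
proof -
  let ?E = "Emat s k B"
  have "congr_mat N ?E Lam i j = (\<Sum>a=1..N. (\<Sum>b=1..N. Lam a b * ?E b j) * ?E a i)"
    unfolding congr_mat_def by (simp add: sum_distrib_left sum_distrib_right mult_ac)
  also have "\<dots> = (\<Sum>a=1..N. (Lam a j + (if j = k then (\<Sum>b=1..N. Lam a b * wv s k B b) else 0)) * ?E a i)"
    by (rule sum.cong[OF refl]) (simp only: col_sum[OF j])
  also have "\<dots> = Lam i j + (if j = k then (\<Sum>b=1..N. Lam i b * wv s k B b) else 0)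
    + (if i = k then (\<Sum>a=1..N. (Lam a j + (if j = k then (\<Sum>b=1..N. Lam a b * wv s k B b) else 0)) * wv s k B a) else 0)"
    by (rule col_sum[OF i])
  finally show ?thesis .
qed

lemma wv_diff:
  assumes "B k k = 0"
  shows "(\<Sum>b\<in>A. X b * wv 1 k B b) = (\<Sum>b\<in>A. X b * wv (-1) k B b) - (\<Sum>b\<in>A. X b * B b k)"
proof -
  have "(\<Sum>b\<in>A. X b * wv 1 k B b) = (\<Sum>b\<in>A. X b * wv (-1) k B b - X b * B b k)"
    by (rule sum.cong[OF refl]) (use assms in \<open>auto simp: wv_def max_def algebra_simps\<close>)
  then show ?thesis by (simp add: sum_subtractf)
qed

lemma indep_s:
  assumes ex: "ex \<subseteq> {1..N}" and kex: "k \<in> ex" and s: "s \<in> {1,-1}"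
    and Bkk: "B k k = 0" and sk: "skew_int N Lam"
    and comp: "compatible N ex Lam B d"
    and i: "i \<in> {1..N}" and j: "j \<in> {1..N}"
  shows "congr_mat N (Emat 1 k B) Lam i j = congr_mat N (Emat s k B) Lam i j"
proof (cases "s = 1")
  case True then show ?thesis by simp
next
  case False
  then have sm: "s = -1" using s by auto
  have k: "k \<in> {1..N}" using ex kex by auto
  have cb: "(\<Sum>a=1..N. B a k * Lam a b) = (if b = k then d k else 0)" if "b \<in> {1..N}" for b
    using comp that kex unfolding compatible_def by auto
  have cb2: "(\<Sum>a=1..N. Lam b a * B a k) = - (if b = k then d k else 0)" if b: "b \<in> {1..N}" for b
  proof -
    have "(\<Sum>a=1..N. Lam b a * B a k) = (\<Sum>a=1..N. - (B a k * Lam a b))"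
    proof (rule sum.cong[OF refl])
      fix a assume "a \<in> {1..N}"
      then have "Lam b a = - Lam a b" using sk b unfolding skew_int_def by blast
      then show "Lam b a * B a k = - (B a k * Lam a b)" by simp
    qed
    then show ?thesis using cb[OF b] by (simp add: sum_negf)
  qed
  show ?thesis
  proof (cases "i = k \<and> j = k")
    case True
    have "congr_mat N (Emat 1 k B) Lam k k = 0" "congr_mat N (Emat s k B) Lam k k = 0"
      using congr_skew[OF sk] k unfolding skew_int_def by (metis add.inverse_unique add_eq_0_iff2 neg_equal_zero)+
    then show ?thesis using True by simp
  next
    case False
    note f1 = congr_form[OF i j, of 1 k B Lam] and f2 = congr_form[OF i j, of s k B Lam]
    show ?thesis
    proof (cases "j = k")
      case True
      then have "i \<noteq> k" using False by auto
      then show ?thesis using f1 f2 True sm wv_diff[where B=B and k=k and A="{1..N}" and X="\<lambda>b. Lam i b", OF Bkk] cb2[OF i] by simp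
    next
      case jk: False
      show ?thesis
      proof (cases "i = k")
        case True
        have "(\<Sum>a=1..N. Lam a j * wv 1 k B a) = (\<Sum>a=1..N. Lam a j * wv (-1) k B a)"
          using wv_diff[where B=B and k=k and A="{1..N}" and X="\<lambda>a. Lam a j", OF Bkk] cb[OF j] jk by (simp add: mult.commute)
        then show ?thesis using f1 f2 True jk sm by simp
      next
        case False then show ?thesis using f1 f2 jk by simp
      qed
    qed
  qed
qed

lemma sign_rel:
  fixes x y p q :: int
  assumes "p * x = - (q * y)" "p > 0" "q > 0"
  shows "(0 < x \<longleftrightarrow> y < 0) \<and> (x < 0 \<longleftrightarrow> 0 < y)"
proof -
  have a1: "(0 < x) = (0 < p * x)" "(x < 0) = (p * x < 0)"
    using assms(2) by (simp_all add: zero_less_mult_iff mult_less_0_iff)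
  have a2: "(0 < y) = (0 < q * y)" "(y < 0) = (q * y < 0)"
    using assms(3) by (simp_all add: zero_less_mult_iff mult_less_0_iff)
  show ?thesis using a1 a2 assms(1) by linarith
qed

lemma DB_mut:
  assumes kex: "k \<in> ex" and dpos: "\<forall>j\<in>ex. d j > 0" and db: "DB_skew ex B d"
  shows "DB_skew ex (mut_B k B) d"
  unfolding DB_skew_def
proof (intro ballI)
  fix i j assume i: "i \<in> ex" and j: "j \<in> ex"
  have dbij: "d i * B i j = - (d j * B j i)" using db i j unfolding DB_skew_def by blast
  show "d i * mut_B k B i j = - (d j * mut_B k B j i)"
  proof (cases "i = k \<or> j = k")
    case True then show ?thesis using dbij by (auto simp: mut_B_def)
  next
    case False
    have e1: "d i * B i k = - (d k * B k i)" using db i kex unfolding DB_skew_def by blast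
    have e2: "d k * B k j = - (d j * B j k)" using db j kex unfolding DB_skew_def by blast
    have pi: "d i > 0" "d j > 0" "d k > 0" using dpos i j kex by auto
    have s1: "(0 < B i k \<longleftrightarrow> B k i < 0) \<and> (B i k < 0 \<longleftrightarrow> 0 < B k i)" using sign_rel[OF e1 pi(1,3)] .
    have s2: "(0 < B k j \<longleftrightarrow> B j k < 0) \<and> (B k j < 0 \<longleftrightarrow> 0 < B j k)" using sign_rel[OF e2 pi(3,2)] .
    have pr: "d i * (B i k * B k j) = d j * (B j k * B k i)"
    proof -
      have "d i * (B i k * B k j) = (d i * B i k) * B k j" by (simp add: mult.assoc)
      also have "\<dots> = - (B k i * (d k * B k j))" using e1 by (simp add: algebra_simps)
      also have "\<dots> = B k i * (d j * B j k)" using e2 by simp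
      finally show ?thesis by (simp add: algebra_simps)
    qed
    have "mut_B k B i j = B i j + (if 0 < B i k \<and> 0 < B k j then B i k * B k j else if B i k < 0 \<and> B k j < 0 then -(B i k * B k j) else 0)"
      using False by (simp add: mut_B_def div_half)
    then have "d i * mut_B k B i j = d i * B i j + d i * (if 0 < B i k \<and> 0 < B k j then B i k * B k j else if B i k < 0 \<and> B k j < 0 then -(B i k * B k j) else 0)"
      by (simp add: distrib_left)
    moreover have "mut_B k B j i = B j i + (if 0 < B j k \<and> 0 < B k i then B j k * B k i else if B j k < 0 \<and> B k i < 0 then -(B j k * B k i) else 0)"
      using False by (simp add: mut_B_def div_half)
    then have "d j * mut_B k B j i = d j * B j i + d j * (if 0 < B j k \<and> 0 < B k i then B j k * B k i else if B j k < 0 \<and> B k i < 0 then -(B j k * B k i) else 0)"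
      by (simp add: distrib_left)
    ultimately show ?thesis using dbij pr s1 s2 by auto
  qed
qed

theorem proposition5p2:
  fixes l N k :: nat and ex :: "nat set" and L Lam B :: "nat \<Rightarrow> nat \<Rightarrow> int"
    and d :: "nat \<Rightarrow> int" and s :: int
  assumes "l > 0" and "ex \<subseteq> {1..N}"
    and "strict_seed l N ex L B d Lam"
    and "k \<in> ex" and "s \<in> {1, -1}"
  shows "strict_seed l N ex (mut_frame_mat N k B L) (mut_B k B) d
           (congr_mat N (Emat s k B) Lam)"
proof -
  note ex = assms(2) and kex = assms(4) and s = assms(5)
  from assms(3) have skL: "skew_mod l N L" and lc: "l_compatible l N ex L B d"
    and sk: "skew_int N Lam" and cg: "\<forall>i\<in>{1..N}. \<forall>j\<in>{1..N}. [Lam i j = L i j] (mod int l)"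
    and comp: "compatible N ex Lam B d"
    unfolding strict_seed_def rou_seed_def by auto
  from lc have dpos: "\<forall>j\<in>ex. d j > 0" and db: "DB_skew ex B d" unfolding l_compatible_def by auto
  have Bkk: "B k k = 0" using db kex dpos unfolding DB_skew_def by force
  let ?Lp = "congr_mat N (Emat s k B) Lam" and ?Lm = "mut_frame_mat N k B L"
  have c1: "[?Lp i j = ?Lm i j] (mod int l)" if i: "i \<in> {1..N}" and j: "j \<in> {1..N}" for i j
  proof -
    have "[congr_mat N (Emat 1 k B) Lam i j = congr_mat N (Emat 1 k B) L i j] (mod int l)"
      unfolding congr_mat_def
      by (intro cong_sum cong_mult cong_refl) (use cg in auto)
    then show ?thesis using indep_s[OF ex kex s Bkk sk comp i j]
      by (simp add: mut_frame_mat_def)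
  qed
  have skp: "skew_int N ?Lp" using congr_skew[OF sk] .
  have cp: "compatible N ex ?Lp (mut_B k B) d" using compat_mut[OF ex kex s dpos db comp] .
  have skm: "skew_mod l N ?Lm"
    unfolding skew_mod_def
  proof (intro ballI)
    fix i j assume i: "i \<in> {1..N}" and j: "j \<in> {1..N}"
    have "[?Lm i j = ?Lp i j] (mod int l)" using c1[OF i j] by (rule cong_sym)
    moreover have "?Lp i j = - ?Lp j i" using skp i j unfolding skew_int_def by blast
    moreover have "[- ?Lp j i = - ?Lm j i] (mod int l)" using c1[OF j i] by (rule cong_minus_minus_iff[THEN iffD2])
    ultimately show "[?Lm i j = - ?Lm j i] (mod int l)" by (metis cong_trans)
  qed
  have lcm: "l_compatible l N ex ?Lm (mut_B k B) d"
    unfolding l_compatible_def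
  proof (intro conjI ballI)
    show "\<And>j. j \<in> ex \<Longrightarrow> 0 < d j" using dpos by auto
    show "DB_skew ex (mut_B k B) d" using DB_mut[OF kex dpos db] .
    fix i j assume i: "i \<in> {1..N}" and j: "j \<in> ex"
    have "[(\<Sum>m=1..N. mut_B k B m j * ?Lm m i) = (\<Sum>m=1..N. mut_B k B m j * ?Lp m i)] (mod int l)"
      by (intro cong_sum cong_mult cong_refl) (use c1 i in \<open>auto intro: cong_sym\<close>)
    moreover have "(\<Sum>m=1..N. mut_B k B m j * ?Lp m i) = (if i = j then d j else 0)"
      using cp i j unfolding compatible_def by blast
    ultimately show "[(\<Sum>m=1..N. mut_B k B m j * ?Lm m i) = (if i = j then d j else 0)] (mod int l)" by simp
  qed
  show ?thesis
    unfolding strict_seed_def rou_seed_def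
    using skm lcm skp cp c1 by blast
qed

end
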